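(* Let $f(z)=z\big(1+\sum_{n\ge1}c_nz^n\big)$ be holomorphic and univalent in the unit disc and let $\Lambda_p$ ($p\ge0$) be as defined in the context. Define polynomials $F_n(w)$ ($n\ge0$) by $$\frac{zf'(z)}{f(z)-wf(z)^2}=1+\sum_{n\ge1}F_n(w)z^n,\qquad F_0(w)=1,$$ (these are the Faber polynomials of $h(z)=1/f(1/z)$), define $T_n(w)$ by $$\frac{zf'(z)^2}{f(z)-wf(z)^2}=1+\sum_{n\ge1}T_n(w)z^n,\qquad T_0(w)=1,$$ and define constants $a_p^p$ by $$\frac{z^2f'(z)^2}{f(z)^2}=1+\sum_{p\ge1}a_p^pz^p.$$ Then: (1) for every $p\ge1$, $T_{p-1}(w)=F_{p-1}(w)+2c_1F_{p-2}(w)+3c_2F_{p-3}(w)+\cdots+(p-1)c_{p-2}F_1(w)+pc_{p-1}$; (2) for every $p\ge1$ and $u\neq0$, $\Lambda_p(u)+a_p^p\,u=-T_{p-1}(1/u)$; (3) for every fixed $u\neq0$, in a neighborhood of $\xi=0$, $$\frac{\xi^2f'(\xi)^2}{f(\xi)^2}\,\frac{u^2}{f(\xi)-u}=\sum_{p\ge0}\Lambda_p(u)\,\xi^p.$$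
   Context: For $p\ge0$, $\Lambda_p$ denotes the unique function of the form $\Lambda_p(u)=-u^{1-p}+\sum_{j=0}^{p-1}\alpha_ju^{1-j}$ (constants $\alpha_j$ depending on $f$) such that the Laurent expansion at $z=0$ of $z^{1-p}f'(z)+\Lambda_p(f(z))$ contains only powers $z^n$ with $n\ge2$. In particular $\Lambda_0(u)=-u$. *)

theory Defs
  imports "HOL-Analysis.Analysis"
begin

text \<open>Coefficients of the power series expansion of g at 0, valid on a punctured
  disc around 0 (the expressions below are formally 0/0 at z = 0, their
  singularity at 0 being removable).\<close>
definition expansion0 :: "(complex \<Rightarrow> complex) \<Rightarrow> nat \<Rightarrow> complex" where
  "expansion0 g = (THE a. \<exists>r>0. \<forall>z\<in>ball 0 r - {0}. (\<lambda>n. a n * z ^ n) sums g z)"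

definition Lambda_form :: "nat \<Rightarrow> (nat \<Rightarrow> complex) \<Rightarrow> complex \<Rightarrow> complex" where
  "Lambda_form p \<alpha> u = - (u powi (1 - int p)) + (\<Sum>j<p. \<alpha> j * u powi (1 - int j))"

definition Lambda_cond :: "(complex \<Rightarrow> complex) \<Rightarrow> nat \<Rightarrow> (complex \<Rightarrow> complex) \<Rightarrow> bool" where
  "Lambda_cond f p L \<longleftrightarrow> (\<exists>a. \<exists>r>0. \<forall>z\<in>ball 0 r - {0}.
      (\<lambda>n. a n * z ^ (n + 2)) sums (z powi (1 - int p) * deriv f z + L (f z)))"

definition Lambda :: "(complex \<Rightarrow> complex) \<Rightarrow> nat \<Rightarrow> complex \<Rightarrow> complex" where
  "Lambda f p = (THE L. (\<exists>\<alpha>. L = Lambda_form p \<alpha>) \<and> Lambda_cond f p L)"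

definition Fpoly :: "(complex \<Rightarrow> complex) \<Rightarrow> nat \<Rightarrow> complex \<Rightarrow> complex" where
  "Fpoly f n w = expansion0 (\<lambda>z. z * deriv f z / (f z - w * (f z)^2)) n"

definition Tpoly :: "(complex \<Rightarrow> complex) \<Rightarrow> nat \<Rightarrow> complex \<Rightarrow> complex" where
  "Tpoly f n w = expansion0 (\<lambda>z. z * (deriv f z)^2 / (f z - w * (f z)^2)) n"

definition acoef :: "(complex \<Rightarrow> complex) \<Rightarrow> nat \<Rightarrow> complex" where
  "acoef f p = expansion0 (\<lambda>z. z^2 * (deriv f z)^2 / (f z)^2) p"

end

theory Submission
  imports Defs
begin

unbundle no vec_syntax
unbundle fps_syntax





lemma orth_aux:
  fixes U :: "complex fps"
  assumes U0: "U $ 0 = 1" and s: "s \<ge> 1"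
  shows "(fps_deriv (fps_X * U) * inverse U ^ (s+1)) $ s = 0"
proof -
  define V where "V = inverse U"
  have VU: "V * U = 1" unfolding V_def using U0 by (intro inverse_mult_eq_1) simp
  have dV: "fps_deriv V = - fps_deriv U * V^2" unfolding V_def using U0 by (intro fps_inverse_deriv) simp
  have D: "fps_deriv (fps_X * U) = U + fps_X * fps_deriv U" by (simp add: fps_deriv_mult)
  have dW: "fps_deriv (V^s) = fps_const (of_nat s) * fps_deriv V * V^(s-1)"
    by (rule fps_deriv_power)
  have Vs: "V^(s+1) = V^2 * V^(s-1)" using s by (simp add: power_add[symmetric])
  have Vs2: "V^s = V^(s+1) * U" using VU by (simp add: algebra_simps)
  have key: "fps_X * fps_deriv (V^s) - fps_const (of_nat s) * V^s
      = - fps_const (of_nat s) * (fps_deriv (fps_X * U) * V^(s+1))"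
  proof -
    have "fps_X * fps_deriv (V^s) = - fps_const (of_nat s) * fps_X * fps_deriv U * (V^2 * V^(s-1))"
      unfolding dW dV by (simp add: algebra_simps flip: fps_const_neg)
    also have "\<dots> = - fps_const (of_nat s) * fps_X * fps_deriv U * V^(s+1)" unfolding Vs ..
    finally have 1: "fps_X * fps_deriv (V^s) = - fps_const (of_nat s) * fps_X * fps_deriv U * V^(s+1)" .
    show ?thesis unfolding 1 D apply (subst Vs2) by (simp add: algebra_simps flip: fps_const_neg)
  qed
  have "(fps_X * fps_deriv (V^s) - fps_const (of_nat s) * V^s) $ s = 0"
    using s by simp
  hence "of_nat s * (fps_deriv (fps_X * U) * V^(s+1)) $ s = 0"
    unfolding key by simp
  thus ?thesis using s unfolding V_def by simp
qed

lemma UV_pow: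
  fixes U :: "complex fps"
  assumes U0: "U $ 0 = 1" and "i \<le> q"
  shows "U^i * inverse U ^ q = inverse U ^ (q - i)"
proof -
  have VU: "inverse U * U = 1" using U0 by (intro inverse_mult_eq_1) simp
  have "U^i * inverse U ^ q = (inverse U * U)^i * inverse U ^ (q - i)"
    using assms(2) by (simp add: power_mult_distrib power_add[symmetric] algebra_simps)
  thus ?thesis using VU by simp
qed

lemma orth:
  fixes U :: "complex fps"
  assumes U0: "U $ 0 = 1"
  shows "((fps_X * U)^i * fps_deriv (fps_X * U) * inverse U ^ (q+1)) $ q = (if i = q then 1 else 0)"
proof (cases "i \<le> q")
  case False
  have "(fps_X * U)^i * fps_deriv (fps_X * U) * inverse U ^ (q+1)
        = fps_X^i * (U^i * fps_deriv (fps_X * U) * inverse U ^ (q+1))"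
    by (simp add: power_mult_distrib algebra_simps)
  hence "((fps_X * U)^i * fps_deriv (fps_X * U) * inverse U ^ (q+1)) $ q
       = (fps_X^i * (U^i * fps_deriv (fps_X * U) * inverse U ^ (q+1))) $ q" by (rule arg_cong)
  also have "\<dots> = 0" using False by (simp only: fps_X_power_mult_nth) simp
  finally show ?thesis using False by simp
next
  case True
  define s where "s = q - i"
  have "(fps_X * U)^i * fps_deriv (fps_X * U) * inverse U ^ (q+1)
        = fps_X^i * (fps_deriv (fps_X * U) * (U^i * inverse U ^ (q+1)))"
    by (simp add: power_mult_distrib algebra_simps)
  also have "U^i * inverse U ^ (q+1) = inverse U ^ (s+1)"
    using UV_pow[OF U0, of i "q+1"] True unfolding s_def by (simp add: Suc_diff_le)
  finally have e: "(fps_X * U)^i * fps_deriv (fps_X * U) * inverse U ^ (q+1)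
        = fps_X^i * (fps_deriv (fps_X * U) * inverse U ^ (s+1))" .
  show ?thesis
  proof (cases "s = 0")
    case True
    hence "i = q" using \<open>i \<le> q\<close> unfolding s_def by simp
    thus ?thesis unfolding e using True U0 by (simp only: fps_X_power_mult_nth) simp
  next
    case False
    hence "i \<noteq> q" unfolding s_def by simp
    moreover have "q - i = s" unfolding s_def ..
    ultimately show ?thesis unfolding e using orth_aux[OF U0, of s] False \<open>i \<le> q\<close>
      by (simp only: fps_X_power_mult_nth) simp
  qed
qed

lemma UV_pow2:
  fixes U :: "complex fps"
  assumes U0: "U $ 0 = 1" and "q \<le> p"
  shows "U^p * inverse U ^ q = U ^ (p - q)"
proof -
  have VU: "inverse U * U = 1" using U0 by (intro inverse_mult_eq_1) simp
  have "U^p * inverse U ^ q = (inverse U * U)^q * U ^ (p - q)"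
    using assms(2) by (simp add: power_mult_distrib power_add[symmetric] algebra_simps)
  thus ?thesis using VU by simp
qed

lemma mult_nth_zero:
  fixes R A :: "complex fps"
  assumes "\<forall>i\<le>n. R $ i = 0"
  shows "(R * A) $ n = 0"
  using assms by (simp add: fps_mult_nth)

lemma mult_nth_low:
  fixes R A :: "complex fps"
  assumes "\<forall>i<n. R $ i = 0"
  shows "(R * A) $ n = R $ n * A $ 0"
proof -
  have "(R * A) $ n = (\<Sum>i=0..n. R$i * A$(n - i))" by (rule fps_mult_nth)
  also have "\<dots> = (\<Sum>i\<in>{n}. R$i * A$(n - i))"
    using assms by (intro sum.mono_neutral_right) auto
  finally show ?thesis by simp
qed

lemma Bp_one:
  fixes U :: "complex fps"
  assumes U0: "U $ 0 = 1"
  shows "(fps_deriv (fps_X * U) * fps_deriv (fps_X * U) * inverse U * inverse U * (fps_X * U)^p) $ p = 1"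
proof -
  have "fps_deriv (fps_X * U) * fps_deriv (fps_X * U) * inverse U * inverse U * (fps_X * U)^p
      = fps_X^p * (fps_deriv (fps_X * U) * fps_deriv (fps_X * U) * inverse U * inverse U * U^p)"
    by (simp add: power_mult_distrib algebra_simps)
  hence "(fps_deriv (fps_X * U) * fps_deriv (fps_X * U) * inverse U * inverse U * (fps_X * U)^p) $ p
      = (fps_X^p * (fps_deriv (fps_X * U) * fps_deriv (fps_X * U) * inverse U * inverse U * U^p)) $ p"
    by (rule arg_cong)
  also have "\<dots> = 1" using U0 by (simp only: fps_X_power_mult_nth) (simp add: fps_power_zeroth)
  finally show ?thesis .
qed

lemma Lambda_core:
  fixes U :: "complex fps"
  assumes U0: "U $ 0 = 1" and n: "n \<le> p"
  defines "F \<equiv> fps_X * U" and "D \<equiv> fps_deriv (fps_X * U)" and "V \<equiv> inverse U"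
  defines "B \<equiv> (\<lambda>k. (D * D * V * V * F^k) $ p)"
  shows "(D - (\<Sum>k\<le>p. fps_const (B k) * fps_X^(p-k) * U * V^k)) $ n = 0"
proof -
  define Q where "Q = D - (\<Sum>k\<le>p. fps_const (B k) * fps_X^(p-k) * U * V^k)"
  define Y where "Y = D * V * U^p"
  define R where "R = Q * V * U^p"
  have VU: "V * U = 1" unfolding V_def using U0 by (intro inverse_mult_eq_1) simp
  have R_eq: "R = Y - (\<Sum>k\<le>p. fps_const (B k) * F^(p-k))"
  proof -
    have "R = Y - (\<Sum>k\<le>p. fps_const (B k) * fps_X^(p-k) * U * V^k) * V * U^p"
      unfolding R_def Q_def Y_def by (simp add: algebra_simps)
    also have "(\<Sum>k\<le>p. fps_const (B k) * fps_X^(p-k) * U * V^k) * V * U^p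
        = (\<Sum>k\<le>p. fps_const (B k) * F^(p-k))"
      unfolding sum_distrib_right
    proof (intro sum.cong refl)
      fix k assume "k \<in> {..p}"
      hence k: "k \<le> p" by simp
      have "fps_const (B k) * fps_X^(p-k) * U * V^k * V * U^p
          = fps_const (B k) * fps_X^(p-k) * (V * U) * (U^p * V^k)" by (simp add: algebra_simps)
      also have "U^p * V^k = U^(p-k)" unfolding V_def by (rule UV_pow2[OF U0 k])
      finally show "fps_const (B k) * fps_X^(p-k) * U * V^k * V * U^p = fps_const (B k) * F^(p-k)"
        using VU unfolding F_def by (simp add: power_mult_distrib)
    qed
    finally show ?thesis .
  qed
  have Rz: "\<forall>i<q. R $ i = 0" if "q \<le> Suc p" for q
    using that
  proof (induction q)
    case 0 thus ?case by simp
  next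
    case (Suc q)
    hence IH: "\<forall>i<q. R $ i = 0" and q: "q \<le> p" by auto
    have D0: "D $ 0 = 1" unfolding D_def using U0 by simp
    have V0: "V $ 0 = 1" unfolding V_def using U0 by simp
    have "(R * (D * V^(q+1))) $ q = R $ q"
      using mult_nth_low[OF IH] D0 V0 by (simp add: fps_power_zeroth)
    moreover have "(R * (D * V^(q+1))) $ q = (Y * D * V^(q+1)) $ q
        - (\<Sum>k\<le>p. B k * (F^(p-k) * D * V^(q+1)) $ q)"
    proof -
      have "R * (D * V^(q+1)) = Y * D * V^(q+1) - (\<Sum>k\<le>p. fps_const (B k) * (F^(p-k) * D * V^(q+1)))"
        unfolding R_eq left_diff_distrib sum_distrib_right by (simp add: algebra_simps)
      thus ?thesis by (simp add: fps_sum_nth)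
    qed
    moreover have "(\<Sum>k\<le>p. B k * (F^(p-k) * D * V^(q+1)) $ q) = B (p - q)"
    proof -
      have "(\<Sum>k\<le>p. B k * (F^(p-k) * D * V^(q+1)) $ q) = (\<Sum>k\<le>p. if k = p - q then B k else 0)"
      proof (intro sum.cong refl)
        fix k assume "k \<in> {..p}"
        hence "k \<le> p" by simp
        have "(F^(p-k) * D * V^(q+1)) $ q = (if p - k = q then 1 else 0)"
          unfolding F_def D_def V_def by (rule orth[OF U0])
        moreover have "(p - k = q) = (k = p - q)" using \<open>k \<le> p\<close> q by auto
        ultimately show "B k * (F^(p-k) * D * V^(q+1)) $ q = (if k = p - q then B k else 0)" by simp
      qed
      also have "\<dots> = B (p - q)" by simp
      finally show ?thesis .
    qed
    moreover have "(Y * D * V^(q+1)) $ q = B (p - q)"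
    proof -
      have "Y * D * V^(q+1) = D * D * V * V * (U^p * V^q)" unfolding Y_def by (simp add: algebra_simps)
      also have "U^p * V^q = U^(p-q)" unfolding V_def by (rule UV_pow2[OF U0 q])
      finally have 1: "Y * D * V^(q+1) = D * D * V * V * U^(p-q)" .
      have "D * D * V * V * F^(p-q) = fps_X^(p-q) * (D * D * V * V * U^(p-q))"
        unfolding F_def by (simp add: power_mult_distrib algebra_simps)
      hence "B (p - q) = (fps_X^(p-q) * (D * D * V * V * U^(p-q))) $ p" unfolding B_def by (rule arg_cong)
      also have "\<dots> = (D * D * V * V * U^(p-q)) $ q" using q by (simp only: fps_X_power_mult_nth) simp
      finally show ?thesis unfolding 1 by simp
    qed
    ultimately have "R $ q = 0" by simp
    with IH show ?case using less_Suc_eq by auto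
  qed
  have "Q = R * (U * V^p)"
  proof -
    have "R * (U * V^p) = Q * (V * U)^(Suc p)" unfolding R_def by (simp add: algebra_simps power_mult_distrib)
    thus ?thesis using VU by simp
  qed
  hence "Q $ n = (R * (U * V^p)) $ n" by simp
  also have "\<dots> = 0" using Rz[of "Suc p"] n by (intro mult_nth_zero) auto
  finally show ?thesis unfolding Q_def .
qed

lemma Lambda_uniq_formal:
  fixes U :: "complex fps" and \<gamma> :: "nat \<Rightarrow> complex"
  assumes U0: "U $ 0 = 1"
    and P0: "\<forall>n<p. (\<Sum>j<p. fps_const (\<gamma> j) * fps_X^(p-1-j) * U * inverse U ^ j) $ n = 0"
    and j0: "j0 < p"
  shows "\<gamma> j0 = 0"
proof -
  define V where "V = inverse U"
  define F where "F = fps_X * U"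
  define D where "D = fps_deriv (fps_X * U)"
  define P where "P = (\<Sum>j<p. fps_const (\<gamma> j) * fps_X^(p-1-j) * U * V^j)"
  define q where "q = p - 1 - j0"
  have VU: "V * U = 1" unfolding V_def using U0 by (intro inverse_mult_eq_1) simp
  have q: "q < p" unfolding q_def using j0 by simp
  have S_eq: "P * V * U^(p-1) = (\<Sum>j<p. fps_const (\<gamma> j) * F^(p-1-j))"
    unfolding P_def sum_distrib_right
  proof (intro sum.cong refl)
    fix j assume "j \<in> {..<p}"
    hence j: "j \<le> p - 1" by simp
    have "fps_const (\<gamma> j) * fps_X^(p-1-j) * U * V^j * V * U^(p-1)
        = fps_const (\<gamma> j) * fps_X^(p-1-j) * (V * U) * (U^(p-1) * V^j)" by (simp add: algebra_simps)
    also have "U^(p-1) * V^j = U^(p-1-j)" unfolding V_def by (rule UV_pow2[OF U0 j])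
    finally show "fps_const (\<gamma> j) * fps_X^(p-1-j) * U * V^j * V * U^(p-1) = fps_const (\<gamma> j) * F^(p-1-j)"
      using VU unfolding F_def by (simp add: power_mult_distrib)
  qed
  have "(P * (V * U^(p-1) * D * V^(q+1))) $ q = 0"
    using P0 q unfolding P_def V_def by (intro mult_nth_zero) auto
  also have "P * (V * U^(p-1) * D * V^(q+1)) = (\<Sum>j<p. fps_const (\<gamma> j) * (F^(p-1-j) * D * V^(q+1)))"
  proof -
    have "P * (V * U^(p-1) * D * V^(q+1)) = (P * V * U^(p-1)) * D * V^(q+1)" by (simp add: algebra_simps)
    also have "\<dots> = (\<Sum>j<p. fps_const (\<gamma> j) * (F^(p-1-j) * D * V^(q+1)))"
      unfolding S_eq sum_distrib_right by (simp add: algebra_simps)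
    finally show ?thesis .
  qed
  also have "(\<Sum>j<p. fps_const (\<gamma> j) * (F^(p-1-j) * D * V^(q+1))) $ q
      = (\<Sum>j<p. if j = j0 then \<gamma> j else 0)"
    unfolding fps_sum_nth
  proof (intro sum.cong refl)
    fix j assume "j \<in> {..<p}"
    hence "j < p" by simp
    have "(F^(p-1-j) * D * V^(q+1)) $ q = (if p - 1 - j = q then 1 else 0)"
      unfolding F_def D_def V_def by (rule orth[OF U0])
    moreover have "(p - 1 - j = q) = (j = j0)" using \<open>j < p\<close> j0 unfolding q_def by auto
    ultimately show "(fps_const (\<gamma> j) * (F^(p-1-j) * D * V^(q+1))) $ q = (if j = j0 then \<gamma> j else 0)"
      by simp
  qed
  also have "\<dots> = \<gamma> j0" using j0 by simp
  finally show ?thesis by simp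
qed

lemma Gamma_coeff:
  fixes U :: "complex fps" and u :: complex
  assumes U0: "U $ 0 = 1" and u: "u \<noteq> 0"
  defines "F \<equiv> fps_X * U" and "D \<equiv> fps_deriv (fps_X * U)" and "V \<equiv> inverse U"
  shows "(D * D * V * V * (fps_const (u^2) * inverse (F - fps_const u))) $ p
       = - (\<Sum>k\<le>p. u * (1/u)^k * (D * D * V * V * F^k) $ p)"
proof -
  define I where "I = inverse (F - fps_const u)"
  define G where "G = fps_const (1/u) * F"
  define T where "T = (\<Sum>k\<le>p. G^k)"
  define A where "A = D * D * V * V"
  have I1: "I * (F - fps_const u) = 1" unfolding I_def F_def using u by (intro inverse_mult_eq_1) simp
  have GT: "G^(p+1) - 1 = (G - 1) * T" unfolding T_def
    using power_diff_1_eq[of G "Suc p"] by (simp add: lessThan_Suc_atMost)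
  have FG: "F - fps_const u = fps_const u * (G - 1)"
    unfolding G_def using u by (simp add: algebra_simps flip: fps_const_mult)
  have key: "fps_const (u^2) * I = fps_const (u^2) * G^(p+1) * I - fps_const u * T"
  proof -
    have "fps_const (u^2) * G^(p+1) * I - fps_const (u^2) * I = fps_const (u^2) * I * (G^(p+1) - 1)"
      by (simp add: algebra_simps)
    also have "\<dots> = fps_const u * (I * (fps_const u * (G - 1))) * T"
      unfolding GT by (simp add: algebra_simps power2_eq_square flip: fps_const_mult)
    also have "\<dots> = fps_const u * T" unfolding FG[symmetric] I1 by simp
    finally show ?thesis by (simp add: algebra_simps)
  qed
  have z: "(A * (fps_const (u^2) * G^(p+1) * I)) $ p = 0"
  proof -
    have "A * (fps_const (u^2) * G^(p+1) * I) = fps_X^(p+1) * (A * fps_const (u^2) * fps_const ((1/u)^(p+1)) * U^(p+1) * I)"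
      unfolding G_def F_def by (simp add: power_mult_distrib algebra_simps)
    hence "(A * (fps_const (u^2) * G^(p+1) * I)) $ p = (fps_X^(p+1) * (A * fps_const (u^2) * fps_const ((1/u)^(p+1)) * U^(p+1) * I)) $ p"
      by (rule arg_cong)
    also have "\<dots> = 0" by (simp only: fps_X_power_mult_nth) simp
    finally show ?thesis .
  qed
  have "(A * (fps_const (u^2) * I)) $ p = (A * (fps_const (u^2) * G^(p+1) * I)) $ p - u * (A * T) $ p"
  proof -
    have "A * (fps_const (u^2) * I) = A * (fps_const (u^2) * G^(p+1) * I) - fps_const u * (A * T)"
      by (subst key) (simp add: algebra_simps)
    thus ?thesis by simp
  qed
  also have "(A * T) $ p = (\<Sum>k\<le>p. (1/u)^k * (A * F^k) $ p)"
    unfolding T_def sum_distrib_left fps_sum_nth G_def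
  proof (intro sum.cong refl)
    fix k
    have "A * (fps_const (1/u) * F)^k = fps_const ((1/u)^k) * (A * F^k)"
      by (simp add: power_mult_distrib algebra_simps)
    then show "(A * (fps_const (1/u) * F)^k) $ p = (1/u)^k * (A * F^k) $ p" by (metis fps_mult_left_const_nth)
  qed
  finally show ?thesis using z unfolding A_def I_def by (simp add: sum_distrib_left algebra_simps eq_neg_iff_add_eq_0)
qed

lemma part2_formal:
  fixes U :: "complex fps" and u :: complex
  assumes U0: "U $ 0 = 1" and u: "u \<noteq> 0" and p: "p \<ge> 1"
  defines "F \<equiv> fps_X * U" and "D \<equiv> fps_deriv (fps_X * U)" and "V \<equiv> inverse U"
  shows "(D * D * V * V * (fps_const (u^2) * inverse (F - fps_const u))) $ p
          + (D * D * V * V) $ p * u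
       = - (D * D * inverse (U * (1 - fps_const (1/u) * fps_X * U))) $ (p - 1)"
proof -
  define I where "I = inverse (F - fps_const u)"
  have I1: "I * (F - fps_const u) = 1" unfolding I_def F_def using u by (intro inverse_mult_eq_1) simp
  have VU: "V * U = 1" unfolding V_def using U0 by (intro inverse_mult_eq_1) simp
  have "(U * (1 - fps_const (1/u) * fps_X * U)) * (fps_const (-u) * V * I)
       = (V * U) * (I * (fps_const (-u) * (1 - fps_const (1/u) * F)))"
    unfolding F_def by (simp add: algebra_simps)
  also have "fps_const (-u) * (1 - fps_const (1/u) * F) = F - fps_const u"
    using u by (simp add: algebra_simps flip: fps_const_mult fps_const_neg)
  finally have "inverse (U * (1 - fps_const (1/u) * fps_X * U)) = fps_const (-u) * V * I"
    using VU I1 by (intro fps_inverse_unique) simp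
  hence inv: "D * D * inverse (U * (1 - fps_const (1/u) * fps_X * U)) = fps_const (-u) * D * D * V * I"
    by (simp add: algebra_simps)
  have "D * D * V * V * (fps_const (u^2) * I) + fps_const u * (D * D * V * V)
      = fps_const u * D * D * V * V * (fps_const u * I + 1)"
    by (simp add: algebra_simps power2_eq_square flip: fps_const_mult)
  also have "fps_const u * I + 1 = I * F"
  proof -
    have "I * F = I * (F - fps_const u) + fps_const u * I" by (simp add: algebra_simps)
    thus ?thesis using I1 by simp
  qed
  also have "fps_const u * D * D * V * V * (I * F) = fps_X * (fps_const u * D * D * V * I) * (V * U)"
    unfolding F_def by (simp add: algebra_simps)
  finally have e: "D * D * V * V * (fps_const (u^2) * I) + fps_const u * (D * D * V * V)
      = fps_X * (- (fps_const (-u) * D * D * V * I))" using VU by (simp flip: fps_const_neg)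
  have "(D * D * V * V * (fps_const (u^2) * I)) $ p + (D * D * V * V) $ p * u
      = (D * D * V * V * (fps_const (u^2) * I) + fps_const u * (D * D * V * V)) $ p" by simp
  also have "\<dots> = (- (fps_const (-u) * D * D * V * I)) $ (p - 1)" unfolding e using p by simp
  finally show ?thesis unfolding inv I_def by simp
qed





lemma punct_radius:
  fixes a :: "nat \<Rightarrow> complex"
  assumes r: "r > 0" and s: "\<forall>z\<in>ball 0 r - {0}. (\<lambda>n. a n * z ^ n) sums g z"
  shows "fps_conv_radius (Abs_fps a) > 0"
    and "\<forall>z\<in>ball 0 r - {0}. eval_fps (Abs_fps a) z = g z"
proof -
  define z0 where "z0 = complex_of_real (r/2)"
  have "z0 \<in> ball 0 r - {0}" unfolding z0_def using r by (simp add: dist_norm)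
  hence "summable (\<lambda>n. a n * z0 ^ n)" using s by (auto simp: sums_iff)
  hence "conv_radius a \<ge> norm z0" by (rule conv_radius_geI)
  moreover have "norm z0 > 0" unfolding z0_def using r by simp
  ultimately have "ereal 0 < conv_radius a"
    using less_le_trans[of "ereal 0" "ereal (norm z0)" "conv_radius a"] by simp
  thus "fps_conv_radius (Abs_fps a) > 0"
    unfolding fps_conv_radius_def by (simp add: zero_ereal_def)
  show "\<forall>z\<in>ball 0 r - {0}. eval_fps (Abs_fps a) z = g z"
    using s by (auto simp: eval_fps_def sums_iff)
qed

lemma sums_unique_punct:
  fixes a b :: "nat \<Rightarrow> complex"
  assumes r1: "r1 > 0" and s1: "\<forall>z\<in>ball 0 r1 - {0}. (\<lambda>n. a n * z ^ n) sums g z"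
      and r2: "r2 > 0" and s2: "\<forall>z\<in>ball 0 r2 - {0}. (\<lambda>n. b n * z ^ n) sums g z"
  shows "a = b"
proof -
  note A = punct_radius[OF r1 s1] and B = punct_radius[OF r2 s2]
  define r where "r = min r1 r2"
  have r: "r > 0" unfolding r_def using r1 r2 by simp
  have eq: "\<forall>z\<in>ball 0 r - {0}. eval_fps (Abs_fps a) z = eval_fps (Abs_fps b) z"
    using A(2) B(2) unfolding r_def by auto
  have cA: "isCont (eval_fps (Abs_fps a)) 0"
    using A(1) by (intro continuous_eval_fps) (simp add: zero_ereal_def)
  have cB: "isCont (eval_fps (Abs_fps b)) 0"
    using B(1) by (intro continuous_eval_fps) (simp add: zero_ereal_def)
  have ev: "eventually (\<lambda>z. eval_fps (Abs_fps a) z = eval_fps (Abs_fps b) z) (at 0)"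
    unfolding eventually_at using r eq by (auto simp: dist_norm intro!: exI[of _ r])
  have "(eval_fps (Abs_fps a) \<longlongrightarrow> eval_fps (Abs_fps a) 0) (at 0)"
    using cA by (simp add: isCont_def)
  hence "(eval_fps (Abs_fps b) \<longlongrightarrow> eval_fps (Abs_fps a) 0) (at 0)"
    using ev by (rule Lim_transform_eventually)
  moreover have "(eval_fps (Abs_fps b) \<longlongrightarrow> eval_fps (Abs_fps b) 0) (at 0)"
    using cB by (simp add: isCont_def)
  ultimately have e0: "eval_fps (Abs_fps a) 0 = eval_fps (Abs_fps b) 0"
    using tendsto_unique by force
  have "\<forall>z\<in>ball 0 r. eval_fps (Abs_fps a) z = eval_fps (Abs_fps b) z"
    using eq e0 by blast
  moreover have "eventually (\<lambda>z. z \<in> ball 0 r) (nhds (0::complex))"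
    using r by (intro eventually_nhds_in_open) auto
  ultimately have "eventually (\<lambda>z. eval_fps (Abs_fps a) z = eval_fps (Abs_fps b) z) (nhds 0)"
    by (auto elim: eventually_mono)
  hence "Abs_fps a = Abs_fps b" using A(1) B(1) by (intro eval_fps_eqD)
  hence "\<forall>n. Abs_fps a $ n = Abs_fps b $ n" by simp
  thus ?thesis by (simp add: fun_eq_iff)
qed

lemma expansion0_eqI:
  assumes r: "r > 0" and s: "\<forall>z\<in>ball 0 r - {0}. (\<lambda>n. a n * z ^ n) sums g z"
  shows "expansion0 g = a"
  unfolding expansion0_def
proof (rule the_equality)
  show "\<exists>r>0. \<forall>z\<in>ball 0 r - {0}. (\<lambda>n. a n * z ^ n) sums g z" using r s by blast
next
  fix b assume "\<exists>r>0. \<forall>z\<in>ball 0 r - {0}. (\<lambda>n. b n * z ^ n) sums g z"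
  then obtain r2 where "r2 > 0" "\<forall>z\<in>ball 0 r2 - {0}. (\<lambda>n. b n * z ^ n) sums g z" by blast
  thus "b = a" using sums_unique_punct[OF r s] by metis
qed

lemma pexp:
  fixes h g :: "complex \<Rightarrow> complex"
  assumes h: "h has_fps_expansion A" and ev: "eventually (\<lambda>z. g z = h z) (at 0)"
  shows "\<exists>r>0. \<forall>z\<in>ball 0 r - {0}. (\<lambda>n. fps_nth A n * z ^ n) sums g z"
proof -
  have "eventually (\<lambda>z. z \<in> eball 0 (fps_conv_radius A)) (nhds (0::complex))"
    using h by (intro eventually_nhds_in_open) (auto simp: has_fps_expansion_def zero_ereal_def)
  moreover have "eventually (\<lambda>z. eval_fps A z = h z) (nhds 0)"
    using h by (auto simp: has_fps_expansion_def)
  ultimately have "eventually (\<lambda>z::complex. z \<in> eball 0 (fps_conv_radius A) \<and> eval_fps A z = h z) (at 0)"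
    unfolding eventually_at_filter by eventually_elim auto
  hence "eventually (\<lambda>z::complex. z \<in> eball 0 (fps_conv_radius A) \<and> eval_fps A z = h z \<and> g z = h z) (at 0)"
    using ev by eventually_elim auto
  then obtain d where d: "d > 0" "\<forall>z. z \<noteq> 0 \<and> dist z 0 < d \<longrightarrow>
      z \<in> eball 0 (fps_conv_radius A) \<and> eval_fps A z = h z \<and> g z = h z"
    unfolding eventually_at by auto
  show ?thesis
  proof (intro exI[of _ d] conjI ballI d(1))
    fix z :: complex assume "z \<in> ball 0 d - {0}"
    hence "z \<in> eball 0 (fps_conv_radius A) \<and> eval_fps A z = h z \<and> g z = h z"
      using d(2) by (auto simp: dist_commute)
    thus "(\<lambda>n. fps_nth A n * z ^ n) sums g z" using sums_eval_fps[of z A] by simp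
  qed
qed

lemma expansion0_fps:
  fixes h g :: "complex \<Rightarrow> complex"
  assumes h: "h has_fps_expansion A" and ev: "eventually (\<lambda>z. g z = h z) (at 0)"
  shows "expansion0 g = fps_nth A"
  using pexp[OF h ev] expansion0_eqI by blast





lemma has_fps_expansion_power_own:
  fixes F :: "complex fps"
  assumes "g has_fps_expansion F"
  shows "(\<lambda>x. g x ^ n) has_fps_expansion F ^ n"
proof (induction n)
  case 0 thus ?case by simp
next
  case (Suc n)
  have "(\<lambda>x. g x * g x ^ n) has_fps_expansion F * F ^ n"
    by (intro has_fps_expansion_mult assms Suc)
  thus ?case by simp
qed

locale fsetup =
  fixes f :: "complex \<Rightarrow> complex" and c :: "nat \<Rightarrow> complex"
  assumes ser: "\<forall>z\<in>ball 0 1. (\<lambda>n. (if n = 0 then 1 else c n) * z ^ Suc n) sums f z"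
begin

definition U :: "complex fps" where "U = Abs_fps (\<lambda>n. if n = 0 then 1 else c n)"
definition uf :: "complex \<Rightarrow> complex" where "uf z = (if z = 0 then 1 else f z / z)"

lemma U0: "U $ 0 = 1" by (simp add: U_def)

lemma f_exp: "f has_fps_expansion (fps_X * U)"
proof (rule has_fps_expansionI)
  have "eventually (\<lambda>z. z \<in> ball 0 1) (nhds (0::complex))"
    by (intro eventually_nhds_in_open) auto
  thus "eventually (\<lambda>z. (\<lambda>n. (fps_X * U) $ n * z ^ n) sums f z) (nhds 0)"
  proof eventually_elim
    case (elim z)
    have "(\<lambda>i. (fps_X * U) $ (i + 1) * z ^ (i + 1)) sums f z"
      using ser elim by (simp add: U_def)
    thus ?case by (subst (asm) sums_zero_iff_shift) auto
  qed
qed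

lemma uf_exp: "uf has_fps_expansion U"
proof -
  have ne: "fps_X * U \<noteq> 0"
  proof
    assume "fps_X * U = 0"
    hence "(fps_X * U) $ 1 = 0" by simp
    thus False using U0 by simp
  qed
  have "(\<lambda>x. if x = 0 then (fps_X * U) $ 1 else f x / x ^ 1) has_fps_expansion fps_shift 1 (fps_X * U)"
    by (intro has_fps_expansion_shift f_exp subdegree_geI ne) auto
  also have "(\<lambda>x. if x = 0 then (fps_X * U) $ 1 else f x / x ^ 1) = uf"
    using U0 by (auto simp: uf_def fun_eq_iff)
  also have "fps_shift 1 (fps_X * U) = U"
    by (metis fps_shift_times_fps_X' mult.commute)
  finally show ?thesis .
qed

lemma df_exp: "deriv f has_fps_expansion fps_deriv (fps_X * U)"
  by (intro has_fps_expansion_deriv f_exp)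

lemma vf_exp: "(\<lambda>z. inverse (uf z)) has_fps_expansion inverse U"
  using U0 by (intro has_fps_expansion_inverse uf_exp) simp

lemma uf_ev: "eventually (\<lambda>z. uf z \<noteq> 0) (nhds 0)"
proof -
  have "isCont uf 0" using has_fps_expansion_imp_continuous[OF uf_exp] by simp
  hence "(uf \<longlongrightarrow> uf 0) (nhds 0)" by (simp add: isCont_def tendsto_nhds_iff) 
  hence "(uf \<longlongrightarrow> 1) (nhds 0)" by (simp add: uf_def)
  thus ?thesis by (rule tendsto_imp_eventually_ne) simp
qed

lemma f_eq: "z \<noteq> 0 \<Longrightarrow> f z = z * uf z"
  by (simp add: uf_def)

end




lemma ev_at_ne0: "eventually (\<lambda>z::complex. z \<noteq> 0) (at 0)"
  by (simp add: eventually_at_filter)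

lemma powi_split: "(x::complex) \<noteq> 0 \<Longrightarrow> x powi (1 - int k) = x * (1/x)^k"
  by (simp add: power_int_diff power_divide divide_inverse power_inverse)

lemma Lambda_form_eval:
  fixes B :: "nat \<Rightarrow> complex"
  assumes x: "x \<noteq> 0" and Bp: "B p = 1"
  shows "Lambda_form p (\<lambda>j. - B j) x = - (\<Sum>k\<le>p. B k * (x * (1/x)^k))"
proof -
  have "(\<Sum>k\<le>p. B k * (x * (1/x)^k)) = (\<Sum>k<p. B k * (x * (1/x)^k)) + x * (1/x)^p"
    using Bp by (simp add: lessThan_Suc_atMost[symmetric])
  thus ?thesis unfolding Lambda_form_def using x
    by (simp add: powi_split sum_negf)
qed

lemma has_fps_expansion_shift_own:
  fixes Q :: "complex fps"
  assumes q: "q has_fps_expansion Q" and z: "\<forall>i<n. Q $ i = 0"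
  shows "(\<lambda>x. if x = 0 then Q $ n else q x / x ^ n) has_fps_expansion fps_shift n Q"
proof (cases "Q = 0")
  case False
  show ?thesis using False z by (intro has_fps_expansion_shift q subdegree_geI) auto
next
  case True
  have "eventually (\<lambda>x. q x = 0) (nhds 0)"
    using q unfolding True has_fps_expansion_def by (auto elim: eventually_mono)
  hence "eventually (\<lambda>x. 0 = (if x = 0 then Q $ n else q x / x ^ n)) (nhds 0)"
    by eventually_elim (simp add: True)
  thus ?thesis unfolding True has_fps_expansion_def by simp
qed

lemma Lambda_form_diff:
  assumes x: "(x::complex) \<noteq> 0"
  shows "Lambda_form p \<beta> x - Lambda_form p \<alpha> x = (\<Sum>j<p. (\<beta> j - \<alpha> j) * (x * (1/x)^j))"
  unfolding Lambda_form_def using x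
  by (simp add: powi_split sum_subtractf[symmetric] algebra_simps)

context fsetup begin

definition Bc :: "nat \<Rightarrow> nat \<Rightarrow> complex" where
  "Bc p k = (fps_deriv (fps_X * U) * fps_deriv (fps_X * U) * inverse U * inverse U * (fps_X * U)^k) $ p"

lemma Bc_pp: "Bc p p = 1"
  unfolding Bc_def by (rule Bp_one[OF U0])

lemma ev_good: "eventually (\<lambda>z. z \<noteq> 0 \<and> uf z \<noteq> 0) (at 0)"
proof -
  have "eventually (\<lambda>z. uf z \<noteq> 0) (at 0)"
    using uf_ev unfolding eventually_at_filter by (auto elim: eventually_mono)
  thus ?thesis using ev_at_ne0 by eventually_elim auto
qed

lemma Lambda_cond_L: "Lambda_cond f p (Lambda_form p (\<lambda>j. - Bc p j))"
proof -
  define Q where "Q = fps_deriv (fps_X * U) - (\<Sum>k\<le>p. fps_const (Bc p k) * fps_X^(p-k) * U * inverse U ^ k)"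
  define qf where "qf = (\<lambda>z. deriv f z - (\<Sum>k\<le>p. Bc p k * z^(p-k) * uf z * inverse (uf z) ^ k))"
  have hq: "qf has_fps_expansion Q" unfolding qf_def Q_def
    by (intro has_fps_expansion_diff df_exp has_fps_expansion_sum has_fps_expansion_mult
        has_fps_expansion_cmult_left has_fps_expansion_fps_X_power uf_exp has_fps_expansion_power_own vf_exp)
  have Q0: "\<forall>i<p+1. Q $ i = 0"
    unfolding Q_def Bc_def using Lambda_core[OF U0] by simp
  have hh: "(\<lambda>x. x^2 * (if x = 0 then Q $ (p+1) else qf x / x ^ (p+1))) has_fps_expansion fps_X^2 * fps_shift (p+1) Q"
    by (intro has_fps_expansion_mult has_fps_expansion_fps_X_power has_fps_expansion_shift_own hq Q0)
  have ev: "eventually (\<lambda>z. z powi (1 - int p) * deriv f z + Lambda_form p (\<lambda>j. - Bc p j) (f z)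
       = z^2 * (if z = 0 then Q $ (p+1) else qf z / z ^ (p+1))) (at 0)"
    using ev_good
  proof eventually_elim
    case (elim z)
    hence z: "z \<noteq> 0" and u: "uf z \<noteq> 0" by auto
    have E1: "Lambda_form p (\<lambda>j. - Bc p j) (f z) = - (\<Sum>k\<le>p. Bc p k * ((z * uf z) * (1/(z * uf z))^k))"
      using z u by (simp add: f_eq Lambda_form_eval Bc_pp)
    have E2: "z powi (1 - int p) = z^2 / z^(p+1)" using z
      by (simp add: powi_split power_divide field_simps power2_eq_square)
    have E3: "z^2 / z^(p+1) * (z^(p-k) * uf z * inverse (uf z)^k) = (z * uf z) * (1/(z * uf z))^k"
      if "k \<le> p" for k
    proof -
      have "z^(p+1) = z^(p-k) * z^k * z" using that by (simp add: power_add[symmetric])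
      thus ?thesis using z u by (simp add: field_simps power_mult_distrib power_divide power2_eq_square)
    qed
    have "z^2 * (qf z / z^(p+1)) = z^2 / z^(p+1) * deriv f z
        - (\<Sum>k\<le>p. Bc p k * (z^2 / z^(p+1) * (z^(p-k) * uf z * inverse (uf z)^k)))"
    proof -
      have "z^2 * (qf z / z^(p+1)) = (z^2 / z^(p+1)) * qf z" by simp
      also have "\<dots> = z^2 / z^(p+1) * deriv f z
         - z^2 / z^(p+1) * (\<Sum>k\<le>p. Bc p k * z^(p-k) * uf z * inverse (uf z) ^ k)"
        unfolding qf_def by (rule right_diff_distrib)
      also have "z^2 / z^(p+1) * (\<Sum>k\<le>p. Bc p k * z^(p-k) * uf z * inverse (uf z) ^ k)
         = (\<Sum>k\<le>p. Bc p k * (z^2 / z^(p+1) * (z^(p-k) * uf z * inverse (uf z)^k)))"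
        unfolding sum_distrib_left by (intro sum.cong refl) (simp only: mult_ac)
      finally show ?thesis .
    qed
    also have "(\<Sum>k\<le>p. Bc p k * (z^2 / z^(p+1) * (z^(p-k) * uf z * inverse (uf z)^k)))
        = (\<Sum>k\<le>p. Bc p k * ((z * uf z) * (1/(z * uf z))^k))"
      by (intro sum.cong refl, subst E3) auto
    finally show ?case using z unfolding E1 E2 by simp
  qed
  obtain r where r: "r > 0" "\<forall>z\<in>ball 0 r - {0}. (\<lambda>n. (fps_X^2 * fps_shift (p+1) Q) $ n * z ^ n) sums
      (z powi (1 - int p) * deriv f z + Lambda_form p (\<lambda>j. - Bc p j) (f z))"
    using pexp[OF hh ev] by blast
  show ?thesis unfolding Lambda_cond_def
  proof (intro exI[of _ "fps_nth (fps_shift (p+1) Q)"] exI[of _ r] conjI ballI r(1))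
    fix z :: complex assume "z \<in> ball 0 r - {0}"
    hence "(\<lambda>n. (fps_X^2 * fps_shift (p+1) Q) $ n * z ^ n) sums
      (z powi (1 - int p) * deriv f z + Lambda_form p (\<lambda>j. - Bc p j) (f z))" using r(2) by blast
    hence "(\<lambda>n. (fps_X^2 * fps_shift (p+1) Q) $ (n+2) * z ^ (n+2)) sums
      (z powi (1 - int p) * deriv f z + Lambda_form p (\<lambda>j. - Bc p j) (f z))"
      by (subst sums_zero_iff_shift) (auto simp: fps_X_power_mult_nth)
    thus "(\<lambda>n. fps_shift (p+1) Q $ n * z ^ (n + 2)) sums
      (z powi (1 - int p) * deriv f z + Lambda_form p (\<lambda>j. - Bc p j) (f z))"
      by (simp add: fps_X_power_mult_nth)
  qed
qed

lemma Fpoly_eq: "Fpoly f n w = (fps_deriv (fps_X * U) * inverse (U * (1 - fps_const w * fps_X * U))) $ n"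
proof -
  have h: "(\<lambda>z. deriv f z * inverse (uf z * (1 - w * z * uf z))) has_fps_expansion
        fps_deriv (fps_X * U) * inverse (U * (1 - fps_const w * fps_X * U))"
    using U0 by (intro has_fps_expansion_mult df_exp has_fps_expansion_inverse has_fps_expansion_diff
        has_fps_expansion_cmult_left has_fps_expansion_fps_X uf_exp has_fps_expansion_1) simp_all
  show ?thesis unfolding Fpoly_def
  proof (rule fun_cong[OF expansion0_fps[OF h]], use ev_at_ne0 in eventually_elim)
    case (elim z)
    have "f z - w * (f z)^2 = z * (uf z * (1 - w * z * uf z))"
      using elim by (simp add: f_eq power2_eq_square algebra_simps)
    thus ?case using elim by (simp add: divide_inverse)
  qed
qed

lemma Tpoly_eq: "Tpoly f n w = (fps_deriv (fps_X * U) * fps_deriv (fps_X * U) * inverse (U * (1 - fps_const w * fps_X * U))) $ n"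
proof -
  have h: "(\<lambda>z. deriv f z * deriv f z * inverse (uf z * (1 - w * z * uf z))) has_fps_expansion
        fps_deriv (fps_X * U) * fps_deriv (fps_X * U) * inverse (U * (1 - fps_const w * fps_X * U))"
    using U0 by (intro has_fps_expansion_mult df_exp has_fps_expansion_inverse has_fps_expansion_diff
        has_fps_expansion_cmult_left has_fps_expansion_fps_X uf_exp has_fps_expansion_1) simp_all
  show ?thesis unfolding Tpoly_def
  proof (rule fun_cong[OF expansion0_fps[OF h]], use ev_at_ne0 in eventually_elim)
    case (elim z)
    have "f z - w * (f z)^2 = z * (uf z * (1 - w * z * uf z))"
      using elim by (simp add: f_eq power2_eq_square algebra_simps)
    thus ?case using elim by (simp add: divide_inverse power2_eq_square)
  qed
qed

lemma acoef_eq: "acoef f p = (fps_deriv (fps_X * U) * fps_deriv (fps_X * U) * inverse U * inverse U) $ p"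
proof -
  have h: "(\<lambda>z. deriv f z * deriv f z * inverse (uf z) * inverse (uf z)) has_fps_expansion
        fps_deriv (fps_X * U) * fps_deriv (fps_X * U) * inverse U * inverse U"
    by (intro has_fps_expansion_mult df_exp vf_exp)
  show ?thesis unfolding acoef_def
  proof (rule fun_cong[OF expansion0_fps[OF h]], use ev_at_ne0 in eventually_elim)
    case (elim z)
    have zz: "z * (z * (inverse z * inverse z)) = 1" using elim by (simp add: field_simps)
    thus ?case using elim by (simp add: f_eq divide_inverse power2_eq_square)
  qed
qed

lemma gen_sums:
  assumes u0: "u0 \<noteq> 0"
  shows "\<exists>r>0. \<forall>\<xi>\<in>ball 0 r - {0}. (\<lambda>p. (fps_deriv (fps_X * U) * fps_deriv (fps_X * U) * inverse U * inverse U
        * (fps_const (u0^2) * inverse (fps_X * U - fps_const u0))) $ p * \<xi> ^ p) sums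
        (\<xi>^2 * (deriv f \<xi>)^2 / (f \<xi>)^2 * (u0^2 / (f \<xi> - u0)))"
proof (rule pexp)
  show "(\<lambda>z. deriv f z * deriv f z * inverse (uf z) * inverse (uf z) * (u0^2 * inverse (f z - u0))) has_fps_expansion
        fps_deriv (fps_X * U) * fps_deriv (fps_X * U) * inverse U * inverse U
        * (fps_const (u0^2) * inverse (fps_X * U - fps_const u0))"
    using u0 by (intro has_fps_expansion_mult df_exp vf_exp has_fps_expansion_cmult_left
        has_fps_expansion_inverse has_fps_expansion_diff f_exp has_fps_expansion_const) simp_all
  show "eventually (\<lambda>z. z^2 * (deriv f z)^2 / (f z)^2 * (u0^2 / (f z - u0)) =
      deriv f z * deriv f z * inverse (uf z) * inverse (uf z) * (u0^2 * inverse (f z - u0))) (at 0)"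
    using ev_at_ne0
  proof eventually_elim
    case (elim z)
    have zz: "z * (z * (inverse z * inverse z)) = 1" using elim by (simp add: field_simps)
    thus ?case using elim by (simp add: f_eq divide_inverse power2_eq_square)
  qed
qed

lemma Lambda_uniq:
  assumes cond: "Lambda_cond f p (Lambda_form p \<beta>)"
  shows "Lambda_form p \<beta> = Lambda_form p (\<lambda>j. - Bc p j)"
proof (cases "p = 0")
  case True
  thus ?thesis unfolding Lambda_form_def by simp
next
  case False
  hence p: "p \<ge> 1" by simp
  define \<alpha> where "\<alpha> = (\<lambda>j. - Bc p j)"
  define \<gamma> where "\<gamma> = (\<lambda>j. \<beta> j - \<alpha> j)"
  obtain a' r' where r': "r' > 0" "\<forall>z\<in>ball 0 r' - {0}. (\<lambda>n. a' n * z ^ (n + 2)) sums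
      (z powi (1 - int p) * deriv f z + Lambda_form p \<beta> (f z))"
    using cond unfolding Lambda_cond_def by blast
  obtain a r where r: "r > 0" "\<forall>z\<in>ball 0 r - {0}. (\<lambda>n. a n * z ^ (n + 2)) sums
      (z powi (1 - int p) * deriv f z + Lambda_form p \<alpha> (f z))"
    using Lambda_cond_L[of p] unfolding Lambda_cond_def \<alpha>_def by blast
  define P where "P = (\<Sum>j<p. fps_const (\<gamma> j) * fps_X^(p-1-j) * U * inverse U ^ j)"
  define pf where "pf = (\<lambda>z. \<Sum>j<p. \<gamma> j * z^(p-1-j) * uf z * inverse (uf z) ^ j)"
  define H where "H = fps_X^p * Abs_fps (\<lambda>n. a' n - a n)"
  have hP: "pf has_fps_expansion P" unfolding pf_def P_def
    by (intro has_fps_expansion_sum has_fps_expansion_mult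
        has_fps_expansion_cmult_left has_fps_expansion_fps_X_power uf_exp has_fps_expansion_power_own vf_exp)
  obtain r1 where r1: "r1 > 0" "\<forall>z\<in>ball 0 r1 - {0}. (\<lambda>n. P $ n * z ^ n) sums pf z"
    using pexp[OF hP, of pf] by auto
  obtain d where d: "d > 0" "\<forall>z. z \<noteq> 0 \<and> dist z 0 < d \<longrightarrow> z \<noteq> 0 \<and> uf z \<noteq> 0"
    using ev_good unfolding eventually_at by auto
  define r2 where "r2 = min d (min r r')"
  have r2: "r2 > 0" unfolding r2_def using d r r' by simp
  have s2: "\<forall>z\<in>ball 0 r2 - {0}. (\<lambda>n. H $ n * z ^ n) sums pf z"
  proof
    fix z :: complex assume zin: "z \<in> ball 0 r2 - {0}"
    hence z: "z \<noteq> 0" and u: "uf z \<noteq> 0" using d(2) unfolding r2_def by (auto simp: dist_commute)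
    have zr: "z \<in> ball 0 r - {0}" "z \<in> ball 0 r' - {0}" using zin unfolding r2_def by auto
    define x where "x = z * uf z"
    have x: "x \<noteq> 0" "f z = x" unfolding x_def using z u by (auto simp: f_eq)
    have "(\<lambda>n. a' n * z ^ (n + 2) - a n * z ^ (n + 2)) sums
        ((z powi (1 - int p) * deriv f z + Lambda_form p \<beta> (f z)) -
         (z powi (1 - int p) * deriv f z + Lambda_form p \<alpha> (f z)))"
      using r'(2) r(2) zr by (intro sums_diff) auto
    hence "(\<lambda>n. (a' n - a n) * z ^ (n + 2)) sums (\<Sum>j<p. \<gamma> j * (x * (1/x)^j))"
      using Lambda_form_diff[OF x(1), of p \<beta> \<alpha>] unfolding \<gamma>_def x(2)
      by (simp add: algebra_simps)
    hence "(\<lambda>n. z^p / z^2 * ((a' n - a n) * z ^ (n + 2))) sums (z^p / z^2 * (\<Sum>j<p. \<gamma> j * (x * (1/x)^j)))"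
      by (rule sums_mult)
    moreover have "z^p / z^2 * (\<Sum>j<p. \<gamma> j * (x * (1/x)^j)) = pf z"
      unfolding pf_def sum_distrib_left
    proof (intro sum.cong refl)
      fix j assume "j \<in> {..<p}"
      hence j: "j < p" by simp
      have "z^p = z^(p-1-j) * z^j * z" using j by (simp add: power_add[symmetric] power_Suc2[symmetric])
      thus "z^p / z^2 * (\<gamma> j * (x * (1/x)^j)) = \<gamma> j * z^(p-1-j) * uf z * inverse (uf z) ^ j"
        unfolding x_def using z u by (simp add: field_simps power_mult_distrib power_divide power2_eq_square)
    qed
    moreover have "z^p / z^2 * ((a' n - a n) * z ^ (n + 2)) = H $ (n + p) * z ^ (n + p)" for n
      unfolding H_def using z by (simp add: fps_X_power_mult_nth power_add field_simps power2_eq_square)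
    ultimately have "(\<lambda>n. H $ (n + p) * z ^ (n + p)) sums pf z" by simp
    thus "(\<lambda>n. H $ n * z ^ n) sums pf z"
      by (subst (asm) sums_zero_iff_shift) (auto simp: H_def fps_X_power_mult_nth)
  qed
  have "fps_nth P = fps_nth H" using sums_unique_punct[OF r1 r2 s2] .
  hence P0: "\<forall>n<p. P $ n = 0" unfolding H_def by (simp add: fps_X_power_mult_nth)
  have g0: "\<gamma> j = 0" if "j < p" for j
    using Lambda_uniq_formal[OF U0 _ that, of \<gamma>] P0 unfolding P_def by blast
  have "\<forall>j<p. \<beta> j = - Bc p j" using g0 unfolding \<gamma>_def \<alpha>_def
    by (metis diff_minus_eq_add minus_unique add.commute neg_eq_iff_add_eq_0 eq_iff_diff_eq_0)
  thus ?thesis unfolding Lambda_form_def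
    by (intro ext arg_cong2[where f="(+)"] refl sum.cong) auto
qed

lemma Lambda_eq: "Lambda f p = Lambda_form p (\<lambda>j. - Bc p j)"
  unfolding Lambda_def
proof (rule the_equality)
  show "(\<exists>\<alpha>. Lambda_form p (\<lambda>j. - Bc p j) = Lambda_form p \<alpha>) \<and> Lambda_cond f p (Lambda_form p (\<lambda>j. - Bc p j))"
    using Lambda_cond_L by blast
next
  fix L assume "(\<exists>\<alpha>. L = Lambda_form p \<alpha>) \<and> Lambda_cond f p L"
  thus "L = Lambda_form p (\<lambda>j. - Bc p j)" using Lambda_uniq by blast
qed

lemma Lambda_gamma:
  assumes u: "u \<noteq> 0"
  shows "Lambda f p u = (fps_deriv (fps_X * U) * fps_deriv (fps_X * U) * inverse U * inverse U
        * (fps_const (u^2) * inverse (fps_X * U - fps_const u))) $ p"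
proof -
  have "Lambda f p u = - (\<Sum>k\<le>p. Bc p k * (u * (1/u)^k))"
    unfolding Lambda_eq using u Bc_pp by (rule Lambda_form_eval)
  also have "\<dots> = - (\<Sum>k\<le>p. u * (1/u)^k * Bc p k)" by (simp add: mult_ac)
  also have "\<dots> = (fps_deriv (fps_X * U) * fps_deriv (fps_X * U) * inverse U * inverse U
        * (fps_const (u^2) * inverse (fps_X * U - fps_const u))) $ p"
    unfolding Bc_def using Gamma_coeff[OF U0 u, of p] by simp
  finally show ?thesis .
qed

lemma main:
  shows "(\<forall>p\<ge>1. \<forall>w. Tpoly f (p - 1) w =
            (\<Sum>k<p. of_nat (k + 1) * (if k = 0 then 1 else c k) * Fpoly f (p - 1 - k) w))
       \<and> (\<forall>p\<ge>1. \<forall>u. u \<noteq> 0 \<longrightarrow> Lambda f p u + acoef f p * u = - Tpoly f (p - 1) (1 / u))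
       \<and> (\<forall>u. u \<noteq> 0 \<longrightarrow> (\<exists>r>0. \<forall>\<xi>\<in>ball 0 r - {0}.
            (\<lambda>p. Lambda f p u * \<xi> ^ p) sums
              (\<xi>^2 * (deriv f \<xi>)^2 / (f \<xi>)^2 * (u^2 / (f \<xi> - u)))))"
proof (intro conjI allI impI)
  fix p :: nat and w assume p: "p \<ge> 1"
  define D where "D = fps_deriv (fps_X * U)"
  define I where "I = inverse (U * (1 - fps_const w * fps_X * U))"
  have "Tpoly f (p - 1) w = (D * (D * I)) $ (p - 1)"
    unfolding Tpoly_eq D_def I_def by (simp add: mult_ac)
  also have "\<dots> = (\<Sum>i=0..p-1. D $ i * (D * I) $ (p - 1 - i))" by (rule fps_mult_nth)
  also have "\<dots> = (\<Sum>k<p. of_nat (k + 1) * (if k = 0 then 1 else c k) * Fpoly f (p - 1 - k) w)"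
  proof -
    have "{0..p-1} = {..<p}" using p by auto
    thus ?thesis
    proof (intro sum.cong)
      fix k assume "k \<in> {..<p}"
      have "D $ k = of_nat (k + 1) * (if k = 0 then 1 else c k)" unfolding D_def by (simp add: U_def algebra_simps)
      moreover have "(D * I) $ (p - 1 - k) = Fpoly f (p - 1 - k) w" unfolding Fpoly_eq D_def I_def ..
      ultimately show "D $ k * (D * I) $ (p - 1 - k) = of_nat (k + 1) * (if k = 0 then 1 else c k) * Fpoly f (p - 1 - k) w"
        by simp
    qed
  qed
  finally show "Tpoly f (p - 1) w =
            (\<Sum>k<p. of_nat (k + 1) * (if k = 0 then 1 else c k) * Fpoly f (p - 1 - k) w)" .
next
  fix p :: nat and u :: complex assume p: "p \<ge> 1" and u: "u \<noteq> 0"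
  show "Lambda f p u + acoef f p * u = - Tpoly f (p - 1) (1 / u)"
    unfolding Lambda_gamma[OF u] acoef_eq Tpoly_eq using part2_formal[OF U0 u p] by simp
next
  fix u :: complex assume u: "u \<noteq> 0"
  show "\<exists>r>0. \<forall>\<xi>\<in>ball 0 r - {0}.
            (\<lambda>p. Lambda f p u * \<xi> ^ p) sums
              (\<xi>^2 * (deriv f \<xi>)^2 / (f \<xi>)^2 * (u^2 / (f \<xi> - u)))"
    unfolding Lambda_gamma[OF u] by (rule gen_sums[OF u])
qed

end


unbundle vec_syntax
unbundle no fps_syntax

theorem theorem2p1:
  fixes f :: "complex \<Rightarrow> complex" and c :: "nat \<Rightarrow> complex"
  assumes holo: "f holomorphic_on ball 0 1"
    and univ: "inj_on f (ball 0 1)"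
    and ser: "\<forall>z\<in>ball 0 1. (\<lambda>n. (if n = 0 then 1 else c n) * z ^ Suc n) sums f z"
  shows "(\<forall>p\<ge>1. \<forall>w. Tpoly f (p - 1) w =
            (\<Sum>k<p. of_nat (k + 1) * (if k = 0 then 1 else c k) * Fpoly f (p - 1 - k) w))
       \<and> (\<forall>p\<ge>1. \<forall>u. u \<noteq> 0 \<longrightarrow> Lambda f p u + acoef f p * u = - Tpoly f (p - 1) (1 / u))
       \<and> (\<forall>u. u \<noteq> 0 \<longrightarrow> (\<exists>r>0. \<forall>\<xi>\<in>ball 0 r - {0}.
            (\<lambda>p. Lambda f p u * \<xi> ^ p) sums
              (\<xi>^2 * (deriv f \<xi>)^2 / (f \<xi>)^2 * (u^2 / (f \<xi> - u)))))"
proof -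
  interpret fsetup f c using ser by unfold_locales
  show ?thesis by (rule main)
qed

end
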